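(* Work in $\mathsf{ZF}$. For every (definable) proper class $\mathcal{C}$ and every non-zero ordinal $\alpha$, there is a surjection from $\mathcal{C}$ onto $\alpha$. *)

theory Defs
  imports Main
begin

datatype form =
    Mem nat nat
  | Eq nat nat
  | Neg form
  | Conj form form
  | Ex nat form

fun sat :: "('a \<Rightarrow> 'a \<Rightarrow> bool) \<Rightarrow> (nat \<Rightarrow> 'a) \<Rightarrow> form \<Rightarrow> bool" where
  "sat r e (Mem i j) = r (e i) (e j)"
| "sat r e (Eq i j) = (e i = e j)"
| "sat r e (Neg p) = (\<not> sat r e p)"
| "sat r e (Conj p q) = (sat r e p \<and> sat r e q)"
| "sat r e (Ex n p) = (\<exists>a. sat r (e(n := a)) p)"

definition zf_model :: "('a \<Rightarrow> 'a \<Rightarrow> bool) \<Rightarrow> bool" where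
  "zf_model r \<longleftrightarrow>
     \<comment> \<open>Extensionality\<close>
     (\<forall>x y. (\<forall>z. r z x \<longleftrightarrow> r z y) \<longrightarrow> x = y) \<and>
     \<comment> \<open>Foundation\<close>
     (\<forall>x. (\<exists>y. r y x) \<longrightarrow> (\<exists>y. r y x \<and> \<not> (\<exists>z. r z y \<and> r z x))) \<and>
     \<comment> \<open>Pairing\<close>
     (\<forall>x y. \<exists>p. r x p \<and> r y p) \<and>
     \<comment> \<open>Union\<close>
     (\<forall>x. \<exists>u. \<forall>y z. r z y \<and> r y x \<longrightarrow> r z u) \<and>
     \<comment> \<open>Power set\<close>
     (\<forall>x. \<exists>p. \<forall>y. (\<forall>z. r z y \<longrightarrow> r z x) \<longrightarrow> r y p) \<and>
     \<comment> \<open>Infinity\<close>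
     (\<exists>I. (\<exists>e. r e I \<and> (\<forall>z. \<not> r z e)) \<and>
          (\<forall>y. r y I \<longrightarrow> (\<exists>s. r s I \<and> (\<forall>z. r z s \<longleftrightarrow> r z y \<or> z = y)))) \<and>
     \<comment> \<open>Separation schema\<close>
     (\<forall>\<phi> e n x. \<exists>y. \<forall>z. r z y \<longleftrightarrow> r z x \<and> sat r (e(n := z)) \<phi>) \<and>
     \<comment> \<open>Replacement schema\<close>
     (\<forall>\<phi> e n m x. n \<noteq> m \<longrightarrow>
        (\<forall>u. r u x \<longrightarrow> (\<exists>!w. sat r (e(n := u, m := w)) \<phi>)) \<longrightarrow>
        (\<exists>y. \<forall>w. r w y \<longleftrightarrow> (\<exists>u. r u x \<and> sat r (e(n := u, m := w)) \<phi>)))"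

definition def_class :: "('a \<Rightarrow> 'a \<Rightarrow> bool) \<Rightarrow> form \<Rightarrow> (nat \<Rightarrow> 'a) \<Rightarrow> nat \<Rightarrow> 'a set" where
  "def_class r \<phi> e n = {a. sat r (e(n := a)) \<phi>}"

definition proper_class :: "('a \<Rightarrow> 'a \<Rightarrow> bool) \<Rightarrow> 'a set \<Rightarrow> bool" where
  "proper_class r C \<longleftrightarrow> \<not> (\<exists>s. \<forall>a. r a s \<longleftrightarrow> a \<in> C)"

definition zf_transitive :: "('a \<Rightarrow> 'a \<Rightarrow> bool) \<Rightarrow> 'a \<Rightarrow> bool" where
  "zf_transitive r x \<longleftrightarrow> (\<forall>y z. r z y \<and> r y x \<longrightarrow> r z x)"

definition zf_ordinal :: "('a \<Rightarrow> 'a \<Rightarrow> bool) \<Rightarrow> 'a \<Rightarrow> bool" where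
  "zf_ordinal r x \<longleftrightarrow>
     zf_transitive r x \<and>
     (\<forall>y. r y x \<longrightarrow> \<not> r y y) \<and>
     (\<forall>y z w. r y x \<and> r z x \<and> r w x \<and> r y z \<and> r z w \<longrightarrow> r y w) \<and>
     (\<forall>y z. r y x \<and> r z x \<longrightarrow> r y z \<or> y = z \<or> r z y) \<and>
     (\<forall>s. (\<exists>y. r y s) \<and> (\<forall>y. r y s \<longrightarrow> r y x) \<longrightarrow>
          (\<exists>y. r y s \<and> (\<forall>z. r z s \<longrightarrow> \<not> r z y)))"

definition class_surj_onto ::
  "('a \<Rightarrow> 'a \<Rightarrow> bool) \<Rightarrow> 'a set \<Rightarrow> form \<Rightarrow> (nat \<Rightarrow> 'a) \<Rightarrow> nat \<Rightarrow> nat \<Rightarrow> 'a \<Rightarrow> bool" where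
  "class_surj_onto r C \<psi> e i j a \<longleftrightarrow>
     (\<forall>x\<in>C. \<exists>!y. sat r (e(i := x, j := y)) \<psi>) \<and>
     (\<forall>x\<in>C. \<forall>y. sat r (e(i := x, j := y)) \<psi> \<longrightarrow> r y a) \<and>
     (\<forall>y. r y a \<longrightarrow> (\<exists>x\<in>C. sat r (e(i := x, j := y)) \<psi>))"

end

theory Submission
  imports Defs
begin

fun ren :: "(nat \<Rightarrow> nat) \<Rightarrow> form \<Rightarrow> form" where
  "ren g (Mem i j) = Mem (g i) (g j)"
| "ren g (Eq i j) = Eq (g i) (g j)"
| "ren g (Neg p) = Neg (ren g p)"
| "ren g (Conj p q) = Conj (ren g p) (ren g q)"
| "ren g (Ex n p) = Ex (g n) (ren g p)"

lemma sat_ren: "inj g \<Longrightarrow> sat r e (ren g \<phi>) = sat r (e \<circ> g) \<phi>"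
proof (induction \<phi> arbitrary: e)
  case (Ex n p)
  have h: "\<And>a. (e(g n := a)) \<circ> g = (e \<circ> g)(n := a)" using Ex.prems by (auto simp: inj_eq)
  have "sat r e (ren g (Ex n p)) = (\<exists>a. sat r (e(g n := a)) (ren g p))" by simp
  also have "\<dots> = (\<exists>a. sat r ((e(g n := a)) \<circ> g) p)" using Ex.IH[OF Ex.prems] by blast
  also have "\<dots> = sat r (e \<circ> g) (Ex n p)" unfolding h by simp
  finally show ?case .
qed auto

definition env :: "'a list \<Rightarrow> (nat \<Rightarrow> 'a) \<Rightarrow> nat \<Rightarrow> 'a" where
  "env xs q i = (if even i \<and> i div 2 < length xs then xs ! (i div 2) else q i)"


definition acc :: "nat \<Rightarrow> ('a list \<Rightarrow> 'a) \<Rightarrow> bool" where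
  "acc n f \<longleftrightarrow> (\<exists>i<n. \<forall>xs. length xs = n \<longrightarrow> f xs = xs ! i)"

lemma acc_nth: "i < n \<Longrightarrow> acc n (\<lambda>xs. xs ! i)"
  unfolding acc_def by auto

lemma acc_take: "acc n f \<Longrightarrow> n \<le> m \<Longrightarrow> acc m (\<lambda>ys. f (take n ys))"
  unfolding acc_def by force

locale zfm =
  fixes r :: "'a \<Rightarrow> 'a \<Rightarrow> bool" and pe :: "nat \<Rightarrow> 'a"
  assumes zf: "zf_model r"
begin

definition D :: "nat \<Rightarrow> ('a list \<Rightarrow> bool) \<Rightarrow> bool" where
  "D n R \<longleftrightarrow> (\<exists>\<phi>. \<forall>xs q. length xs = n \<longrightarrow> (\<forall>i. odd i \<longrightarrow> q i = pe i) \<longrightarrow>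
      (sat r (env xs q) \<phi> \<longleftrightarrow> R xs))"

lemma D_mem: "acc n f \<Longrightarrow> acc n g \<Longrightarrow> D n (\<lambda>xs. r (f xs) (g xs))"
  unfolding D_def acc_def
  by (elim exE conjE, rule_tac x="Mem (2*i) (2*ia)" in exI) (auto simp: env_def)

lemma D_eq: "acc n f \<Longrightarrow> acc n g \<Longrightarrow> D n (\<lambda>xs. f xs = g xs)"
  unfolding D_def acc_def
  by (elim exE conjE, rule_tac x="Eq (2*i) (2*ia)" in exI) (auto simp: env_def)

lemma D_not: "D n P \<Longrightarrow> D n (\<lambda>xs. \<not> P xs)"
  unfolding D_def by (elim exE, rule_tac x="Neg \<phi>" in exI) auto

lemma D_conj: "D n P \<Longrightarrow> D n Q \<Longrightarrow> D n (\<lambda>xs. P xs \<and> Q xs)"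
  unfolding D_def by (elim exE, rule_tac x="Conj \<phi> \<phi>'" in exI) auto

lemma D_cong: "D n P \<Longrightarrow> (\<And>xs. length xs = n \<Longrightarrow> P xs = Q xs) \<Longrightarrow> D n Q"
  unfolding D_def by metis

lemma D_disj: "D n P \<Longrightarrow> D n Q \<Longrightarrow> D n (\<lambda>xs. P xs \<or> Q xs)"
  by (rule D_cong[OF D_not[OF D_conj[OF D_not D_not]]]) auto

lemma D_imp: "D n P \<Longrightarrow> D n Q \<Longrightarrow> D n (\<lambda>xs. P xs \<longrightarrow> Q xs)"
  by (rule D_cong[OF D_disj[OF D_not]]) auto

lemma D_iff: "D n P \<Longrightarrow> D n Q \<Longrightarrow> D n (\<lambda>xs. P xs \<longleftrightarrow> Q xs)"
proof -
  assume "D n P" "D n Q"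
  then have "D n (\<lambda>xs. (P xs \<longrightarrow> Q xs) \<and> (Q xs \<longrightarrow> P xs))" by (intro D_conj D_imp)
  then show ?thesis by (rule D_cong) auto
qed

lemma D_true: "D n (\<lambda>xs. True)"
  unfolding D_def by (rule exI[of _ "Eq 0 0"]) auto

lemma D_false: "D n (\<lambda>xs. False)"
  unfolding D_def by (rule exI[of _ "Neg (Eq 0 0)"]) auto

lemma env_snoc: "length xs = n \<Longrightarrow> (env xs q)(2*n := a) = env (xs @ [a]) q"
proof (rule ext)
  fix i assume l: "length xs = n"
  show "((env xs q)(2*n := a)) i = env (xs @ [a]) q i"
  proof (cases "i = 2*n")
    case True then show ?thesis using l by (simp add: env_def nth_append)
  next
    case False
    then have "even i \<and> i div 2 < Suc n \<longleftrightarrow> even i \<and> i div 2 < n" by auto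
    then show ?thesis using False l by (auto simp: env_def nth_append)
  qed
qed

lemma D_ex: "D (Suc n) (\<lambda>ys. P (take n ys) (ys ! n)) \<Longrightarrow> D n (\<lambda>xs. \<exists>a. P xs a)"
  unfolding D_def
proof (elim exE, intro exI allI impI)
  fix \<phi> and xs :: "'a list" and q
  assume h: "\<forall>xs q. length xs = Suc n \<longrightarrow> (\<forall>i. odd i \<longrightarrow> q i = pe i) \<longrightarrow>
               sat r (env xs q) \<phi> = P (take n xs) (xs ! n)"
    and l: "length xs = n" and q: "\<forall>i. odd i \<longrightarrow> q i = pe i"
  have "sat r (env xs q) (Ex (2*n) \<phi>) = (\<exists>a. sat r (env (xs @ [a]) q) \<phi>)"
    using env_snoc[OF l] by simp
  also have "\<dots> = (\<exists>a. P xs a)" using h q l by auto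
  finally show "sat r (env xs q) (Ex (2*n) \<phi>) = (\<exists>a. P xs a)" .
qed

lemma D_all: "D (Suc n) (\<lambda>ys. P (take n ys) (ys ! n)) \<Longrightarrow> D n (\<lambda>xs. \<forall>a. P xs a)"
proof -
  assume "D (Suc n) (\<lambda>ys. P (take n ys) (ys ! n))"
  then have "D n (\<lambda>xs. \<not> (\<exists>a. \<not> P xs a))" by (intro D_not D_ex D_not)
  then show ?thesis by (rule D_cong) auto
qed

lemmas D_basic = D_mem D_eq D_not D_conj D_disj D_imp D_iff D_true D_false D_ex D_all
lemmas acc_rules = acc_nth acc_take

lemma D_cls: "acc n f \<Longrightarrow>
   D n (\<lambda>xs. sat r ((\<lambda>i. pe (Suc (2*i)))(n0 := f xs)) \<phi>0)"
  unfolding D_def acc_def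
proof (elim exE conjE, intro exI allI impI)
  fix k and xs :: "'a list" and q
  assume k: "k < n" and f: "\<forall>xs. length xs = n \<longrightarrow> f xs = xs ! k"
    and l: "length xs = n" and q: "\<forall>i. odd i \<longrightarrow> q i = pe i"
  let ?g = "\<lambda>i::nat. Suc (2*i)"
  have ig: "inj ?g" by (auto simp: inj_def)
  have kk: "2*k \<noteq> ?g n0" by presburger
  have "sat r (env xs q) (Ex (?g n0) (Conj (Eq (?g n0) (2*k)) (ren ?g \<phi>0)))
     = (\<exists>a. a = xs ! k \<and> sat r (((env xs q)(?g n0 := a)) \<circ> ?g) \<phi>0)"
    using kk k l by (simp add: sat_ren[OF ig] env_def)
  also have "\<dots> = sat r ((\<lambda>i. pe (Suc (2*i)))(n0 := f xs)) \<phi>0"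
  proof -
    have "((env xs q)(?g n0 := xs!k)) \<circ> ?g = (\<lambda>i. pe (Suc (2*i)))(n0 := xs!k)"
      using l q by (auto simp: env_def)
    then show ?thesis using f l by simp
  qed
  finally show "sat r (env xs q) (Ex (?g n0) (Conj (Eq (?g n0) (2*k)) (ren ?g \<phi>0))) =
      sat r ((\<lambda>i. pe (Suc (2*i)))(n0 := f xs)) \<phi>0" .
qed

end

context zfm begin

lemmas zfD = zf[unfolded zf_model_def]
lemmas ext_ax = zfD[THEN conjunct1]
lemmas found_ax = zfD[THEN conjunct2, THEN conjunct1]
lemmas pair_ax = zfD[THEN conjunct2, THEN conjunct2, THEN conjunct1]
lemmas union_ax0 = zfD[THEN conjunct2, THEN conjunct2, THEN conjunct2, THEN conjunct1]
lemmas power_ax0 = zfD[THEN conjunct2, THEN conjunct2, THEN conjunct2, THEN conjunct2, THEN conjunct1]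
lemmas inf_ax = zfD[THEN conjunct2, THEN conjunct2, THEN conjunct2, THEN conjunct2, THEN conjunct2, THEN conjunct1]
lemmas sep_ax = zfD[THEN conjunct2, THEN conjunct2, THEN conjunct2, THEN conjunct2, THEN conjunct2, THEN conjunct2, THEN conjunct1]
lemmas repl_ax = zfD[THEN conjunct2, THEN conjunct2, THEN conjunct2, THEN conjunct2, THEN conjunct2, THEN conjunct2, THEN conjunct2]

lemma ext: "(\<And>z. r z x = r z y) \<Longrightarrow> x = y"
  using ext_ax by blast

lemma found: "r y x \<Longrightarrow> \<exists>y. r y x \<and> (\<forall>z. r z y \<longrightarrow> \<not> r z x)"
  using found_ax by blast

lemma pairing: "\<exists>p. r a p \<and> r b p"
  using pair_ax by blast

lemma union_ax: "\<exists>u. \<forall>y z. r z y \<and> r y x \<longrightarrow> r z u"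
  using union_ax0 by blast

lemma power_ax: "\<exists>p. \<forall>y. (\<forall>z. r z y \<longrightarrow> r z x) \<longrightarrow> r y p"
  using power_ax0 by blast

lemma sepD: "D (Suc n) R \<Longrightarrow> length ps = n \<Longrightarrow> \<exists>y. \<forall>z. r z y \<longleftrightarrow> r z x \<and> R (ps @ [z])"
proof -
  assume "D (Suc n) R" and l: "length ps = n"
  then obtain \<phi> where h: "\<And>xs q. length xs = Suc n \<Longrightarrow> (\<forall>i. odd i \<longrightarrow> q i = pe i) \<Longrightarrow>
      sat r (env xs q) \<phi> = R xs" unfolding D_def by blast
  note s = sep_ax
  obtain y where y: "\<forall>z. r z y \<longleftrightarrow> r z x \<and> sat r ((env ps pe)(2*n := z)) \<phi>"
    using s by blast
  show ?thesis
    by (rule exI[of _ y]) (simp add: y env_snoc[OF l] h l)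
qed

lemma replD: "D (Suc (Suc n)) R \<Longrightarrow> length ps = n \<Longrightarrow> (\<And>u. r u x \<Longrightarrow> \<exists>!w. R (ps @ [u, w]))
  \<Longrightarrow> \<exists>y. \<forall>w. r w y \<longleftrightarrow> (\<exists>u. r u x \<and> R (ps @ [u, w]))"
proof -
  assume "D (Suc (Suc n)) R" and l: "length ps = n" and f: "\<And>u. r u x \<Longrightarrow> \<exists>!w. R (ps @ [u, w])"
  then obtain \<phi> where h: "\<And>xs q. length xs = Suc (Suc n) \<Longrightarrow> (\<forall>i. odd i \<longrightarrow> q i = pe i) \<Longrightarrow>
      sat r (env xs q) \<phi> = R xs" unfolding D_def by blast
  note s = repl_ax
  have e: "\<And>u w. (env ps pe)(2*n := u, 2*Suc n := w) = env (ps @ [u, w]) pe"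
    using l env_snoc[of ps n pe] env_snoc[of "ps @ [_]" "Suc n" pe] by simp
  have e2: "\<And>u w. sat r ((env ps pe)(2*n := u, 2*Suc n := w)) \<phi> = R (ps @ [u, w])"
    unfolding e using l by (intro h) auto
  have "2*n \<noteq> 2*Suc n \<longrightarrow>
        (\<forall>u. r u x \<longrightarrow> (\<exists>!w. sat r ((env ps pe)(2*n := u, 2*Suc n := w)) \<phi>)) \<longrightarrow>
        (\<exists>y. \<forall>w. r w y \<longleftrightarrow> (\<exists>u. r u x \<and> sat r ((env ps pe)(2*n := u, 2*Suc n := w)) \<phi>))"
    using s by blast
  then show ?thesis using f unfolding e2 by auto
qed

definition isset :: "('a \<Rightarrow> bool) \<Rightarrow> bool" where
  "isset P \<longleftrightarrow> (\<exists>y. \<forall>z. r z y \<longleftrightarrow> P z)"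

definition setof :: "('a \<Rightarrow> bool) \<Rightarrow> 'a" where
  "setof P = (THE y. \<forall>z. r z y \<longleftrightarrow> P z)"

lemma setof_mem: "isset P \<Longrightarrow> r z (setof P) \<longleftrightarrow> P z"
proof -
  assume "isset P"
  then obtain y where y: "\<forall>z. r z y \<longleftrightarrow> P z" unfolding isset_def by blast
  have "\<forall>z. r z (setof P) \<longleftrightarrow> P z"
    unfolding setof_def
  proof (rule theI[of _ y])
    show "\<forall>z. r z y \<longleftrightarrow> P z" by (rule y)
    fix y' assume "\<forall>z. r z y' \<longleftrightarrow> P z"
    then show "y' = y" using y by (intro ext) simp
  qed
  then show ?thesis by blast
qed

lemma setof_eq: "isset P \<Longrightarrow> (y = setof P) \<longleftrightarrow> (\<forall>z. r z y \<longleftrightarrow> P z)"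
  using setof_mem ext by metis

lemma isset_sep: "(\<And>z. P z \<Longrightarrow> r z x) \<Longrightarrow> D (Suc n) R \<Longrightarrow> length ps = n \<Longrightarrow>
   (\<And>z. P z = R (ps @ [z])) \<Longrightarrow> isset P"
  unfolding isset_def using sepD[of n R ps x] by metis

definition emp :: 'a where "emp = setof (\<lambda>z. False)"
definition upair :: "'a \<Rightarrow> 'a \<Rightarrow> 'a" where "upair a b = setof (\<lambda>z. z = a \<or> z = b)"
definition Uni :: "'a \<Rightarrow> 'a" where "Uni x = setof (\<lambda>z. \<exists>y. r z y \<and> r y x)"
definition Pw :: "'a \<Rightarrow> 'a" where "Pw x = setof (\<lambda>y. \<forall>z. r z y \<longrightarrow> r z x)"
definition succ :: "'a \<Rightarrow> 'a" where "succ a = setof (\<lambda>z. r z a \<or> z = a)"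
definition opair :: "'a \<Rightarrow> 'a \<Rightarrow> 'a" where "opair a b = upair (upair a a) (upair a b)"

lemma isset_emp: "isset (\<lambda>z. False)"
  by (rule isset_sep[of _ x 0 "\<lambda>xs. False" "[]"]) (auto intro: D_false)

lemma emp_mem[simp]: "\<not> r z emp"
  unfolding emp_def using setof_mem[OF isset_emp] by simp

lemma isset_upair: "isset (\<lambda>z. z = a \<or> z = b)"
proof -
  obtain p where "r a p \<and> r b p" using pairing by blast
  then show ?thesis
    apply (intro isset_sep[of _ p 2 "\<lambda>xs. xs!2 = xs!0 \<or> xs!2 = xs!1" "[a,b]"])
    subgoal by auto
    subgoal by (rule D_basic acc_rules | simp)+
    by auto
qed

lemma upair_mem[simp]: "r z (upair a b) \<longleftrightarrow> z = a \<or> z = b"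
  unfolding upair_def by (rule setof_mem[OF isset_upair])

lemma isset_Un: "isset (\<lambda>z. \<exists>y. r z y \<and> r y x)"
proof -
  obtain u where "\<forall>y z. r z y \<and> r y x \<longrightarrow> r z u" using union_ax by blast
  then show ?thesis
    apply (intro isset_sep[of _ u 1 "\<lambda>xs. \<exists>y. r (xs!1) y \<and> r y (xs!0)" "[x]"])
    subgoal by auto
    subgoal by (rule D_basic acc_rules | simp)+
    by auto
qed

lemma Uni_mem[simp]: "r z (Uni x) \<longleftrightarrow> (\<exists>y. r z y \<and> r y x)"
  unfolding Uni_def by (rule setof_mem[OF isset_Un])

lemma isset_Pw: "isset (\<lambda>y. \<forall>z. r z y \<longrightarrow> r z x)"
proof -
  obtain p where "\<forall>y. (\<forall>z. r z y \<longrightarrow> r z x) \<longrightarrow> r y p" using power_ax by blast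
  then show ?thesis
    apply (intro isset_sep[of _ p 1 "\<lambda>xs. \<forall>z. r z (xs!1) \<longrightarrow> r z (xs!0)" "[x]"])
    subgoal by auto
    subgoal by (rule D_basic acc_rules | simp)+
    by auto
qed

lemma Pw_mem[simp]: "r y (Pw x) \<longleftrightarrow> (\<forall>z. r z y \<longrightarrow> r z x)"
  unfolding Pw_def by (rule setof_mem[OF isset_Pw])

lemma isset_succ: "isset (\<lambda>z. r z a \<or> z = a)"
  apply (intro isset_sep[of _ "Uni (upair a (upair a a))" 1 "\<lambda>xs. r (xs!1) (xs!0) \<or> xs!1 = xs!0" "[a]"])
  subgoal by (metis upair_mem Uni_mem)
  subgoal by (rule D_basic acc_rules | simp)+
  by auto

lemma succ_mem[simp]: "r z (succ a) \<longleftrightarrow> r z a \<or> z = a"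
  unfolding succ_def by (rule setof_mem[OF isset_succ])

lemma upair_eq_iff: "upair a b = upair c d \<longleftrightarrow> (a = c \<and> b = d) \<or> (a = d \<and> b = c)"
proof
  assume "upair a b = upair c d"
  then have "\<And>z. (z = a \<or> z = b) \<longleftrightarrow> (z = c \<or> z = d)" by (metis upair_mem)
  then show "(a = c \<and> b = d) \<or> (a = d \<and> b = c)" by metis
next
  assume "(a = c \<and> b = d) \<or> (a = d \<and> b = c)"
  then show "upair a b = upair c d" by (auto intro: ext)
qed

lemma opair_inj: "opair a b = opair c d \<longleftrightarrow> a = c \<and> b = d"
  unfolding opair_def upair_eq_iff by auto

end

context zfm begin

lemma D_upair: "acc n f \<Longrightarrow> acc n g \<Longrightarrow> acc n h \<Longrightarrow> D n (\<lambda>xs. h xs = upair (f xs) (g xs))"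
proof -
  assume a: "acc n f" "acc n g" "acc n h"
  have "D n (\<lambda>xs. \<forall>z. r z (h xs) \<longleftrightarrow> z = f xs \<or> z = g xs)"
    by (rule D_basic acc_rules | simp add: a)+
  then show ?thesis by (rule D_cong) (simp add: upair_def setof_eq[OF isset_upair])
qed

lemma D_Uni: "acc n f \<Longrightarrow> acc n h \<Longrightarrow> D n (\<lambda>xs. h xs = Uni (f xs))"
proof -
  assume a: "acc n f" "acc n h"
  have "D n (\<lambda>xs. \<forall>z. r z (h xs) \<longleftrightarrow> (\<exists>y. r z y \<and> r y (f xs)))"
    by (rule D_basic acc_rules | simp add: a)+
  then show ?thesis by (rule D_cong) (simp add: Uni_def setof_eq[OF isset_Un])
qed

lemma D_succ: "acc n f \<Longrightarrow> acc n h \<Longrightarrow> D n (\<lambda>xs. h xs = succ (f xs))"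
proof -
  assume a: "acc n f" "acc n h"
  have "D n (\<lambda>xs. \<forall>z. r z (h xs) \<longleftrightarrow> r z (f xs) \<or> z = f xs)"
    by (rule D_basic acc_rules | simp add: a)+
  then show ?thesis by (rule D_cong) (simp add: succ_def setof_eq[OF isset_succ])
qed

lemma D_emp: "acc n h \<Longrightarrow> D n (\<lambda>xs. h xs = emp)"
proof -
  assume a: "acc n h"
  have "D n (\<lambda>xs. \<forall>z. \<not> r z (h xs))"
    by (rule D_basic acc_rules | simp add: a)+
  then show ?thesis by (rule D_cong) (simp add: emp_def setof_eq[OF isset_emp])
qed

lemma D_opair: "acc n f \<Longrightarrow> acc n g \<Longrightarrow> acc n h \<Longrightarrow> D n (\<lambda>xs. h xs = opair (f xs) (g xs))"
proof -
  assume a: "acc n f" "acc n g" "acc n h"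
  have "D n (\<lambda>xs. \<exists>s t. s = upair (f xs) (f xs) \<and> t = upair (f xs) (g xs) \<and> h xs = upair s t)"
    by (rule D_upair D_basic acc_rules | simp add: a)+
  then show ?thesis by (rule D_cong) (simp add: opair_def)
qed

abbreviation Ord where "Ord \<equiv> zf_ordinal r"

lemma D_Ord: "acc n f \<Longrightarrow> D n (\<lambda>xs. Ord (f xs))"
  unfolding zf_ordinal_def zf_transitive_def
  by (rule D_basic acc_rules | simp)+

lemmas D_graph = D_upair D_Uni D_succ D_emp D_opair D_Ord
lemmas Drules = D_graph D_basic

end

context zfm begin

lemma ord_trans: "Ord a \<Longrightarrow> r y a \<Longrightarrow> r z y \<Longrightarrow> r z a"
  unfolding zf_ordinal_def zf_transitive_def by blast

lemma ord_irr_el: "Ord a \<Longrightarrow> r y a \<Longrightarrow> \<not> r y y"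
  unfolding zf_ordinal_def by blast

lemma ord_tri_el: "Ord a \<Longrightarrow> r y a \<Longrightarrow> r z a \<Longrightarrow> r y z \<or> y = z \<or> r z y"
  unfolding zf_ordinal_def by blast

lemma ord_wf: "Ord a \<Longrightarrow> r y s \<Longrightarrow> (\<And>y. r y s \<Longrightarrow> r y a) \<Longrightarrow> \<exists>m. r m s \<and> (\<forall>z. r z s \<longrightarrow> \<not> r z m)"
  unfolding zf_ordinal_def by blast

lemma ord_irrefl: "Ord a \<Longrightarrow> \<not> r a a"
  using ord_irr_el by blast

lemma ord_elem: "Ord a \<Longrightarrow> r b a \<Longrightarrow> Ord b"
  unfolding zf_ordinal_def zf_transitive_def by meson

lemma ord_min: "D (Suc n) R \<Longrightarrow> length ps = n \<Longrightarrow> R (ps @ [a]) \<Longrightarrow> Ord a \<Longrightarrow>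
   \<exists>m. R (ps @ [m]) \<and> (\<forall>x. R (ps @ [x]) \<longrightarrow> \<not> r x m)"
proof -
  assume d: "D (Suc n) R" and l: "length ps = n" and ra: "R (ps @ [a])" and oa: "Ord a"
  obtain s where s: "\<forall>z. r z s \<longleftrightarrow> r z a \<and> R (ps @ [z])" using sepD[OF d l] by blast
  show ?thesis
  proof (cases "\<exists>y. r y s")
    case False
    then show ?thesis using ra s by blast
  next
    case True
    then obtain y where "r y s" by blast
    then obtain m where m: "r m s" "\<forall>z. r z s \<longrightarrow> \<not> r z m"
      using ord_wf[OF oa, of y s] s by blast
    have "\<forall>x. R (ps @ [x]) \<longrightarrow> \<not> r x m"
      using m s ord_trans[OF oa] by blast
    then show ?thesis using m s by blast
  qed
qed

end

context zfm begin
lemma ord_sub: "Ord a \<Longrightarrow> (\<And>z. r z c \<Longrightarrow> r z a) \<Longrightarrow> zf_transitive r c \<Longrightarrow> c = a \<or> r c a"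
proof -
  assume oa: "Ord a" and sub: "\<And>z. r z c \<Longrightarrow> r z a" and tc: "zf_transitive r c"
  show ?thesis
  proof (cases "\<exists>z. r z a \<and> \<not> r z c")
    case False
    then have "c = a" using sub by (intro ext) blast
    then show ?thesis by simp
  next
    case True
    then obtain z0 where z0: "r z0 a" "\<not> r z0 c" by blast
    have dd: "D (Suc 1) (\<lambda>xs. \<not> r (xs!1) (xs!0))" by (rule Drules acc_rules | simp)+
    obtain s where s: "\<forall>z. r z s \<longleftrightarrow> r z a \<and> \<not> r z c"
      using sepD[OF dd, of "[c]" a] by auto
    obtain d where d: "r d s" "\<forall>z. r z s \<longrightarrow> \<not> r z d"
      using ord_wf[OF oa, of z0 s] s z0 by blast
    have "d = c"
    proof (rule ext)
      fix z
      show "r z d = r z c"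
      proof
        assume "r z d"
        then have "r z a" using d s ord_trans[OF oa] by blast
        then show "r z c" using d s \<open>r z d\<close> by blast
      next
        assume zc: "r z c"
        then have za: "r z a" by (rule sub)
        have da: "r d a" "\<not> r d c" using d s by auto
        from ord_tri_el[OF oa za da(1)] show "r z d"
        proof (elim disjE)
          assume "z = d" then show ?thesis using zc da by simp
        next
          assume "r d z" then have "r d c" using tc zc unfolding zf_transitive_def by blast
          then show ?thesis using da by simp
        qed
      qed
    qed
    then show ?thesis using d s by auto
  qed
qed

lemma ord_tri: "Ord a \<Longrightarrow> Ord b \<Longrightarrow> r a b \<or> a = b \<or> r b a"
proof -
  assume oa: "Ord a" and ob: "Ord b"
  have dd: "D (Suc 1) (\<lambda>xs. r (xs!1) (xs!0))" by (rule Drules acc_rules | simp)+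
  obtain c where c: "\<forall>z. r z c \<longleftrightarrow> r z a \<and> r z b"
    using sepD[OF dd, of "[b]" a] by auto
  have tc: "zf_transitive r c"
    unfolding zf_transitive_def using c ord_trans[OF oa] ord_trans[OF ob] by blast
  have ca: "c = a \<or> r c a" using ord_sub[OF oa _ tc] c by blast
  have cb: "c = b \<or> r c b" using ord_sub[OF ob _ tc] c by blast
  have "\<not> (r c a \<and> r c b)"
  proof
    assume "r c a \<and> r c b"
    then have "r c c" using c by blast
    then show False using ord_irr_el[OF oa] \<open>r c a \<and> r c b\<close> by blast
  qed
  then show ?thesis using ca cb by auto
qed

lemma ord_of_trans: "zf_transitive r x \<Longrightarrow> (\<And>y. r y x \<Longrightarrow> Ord y) \<Longrightarrow> Ord x"
proof -
  assume tx: "zf_transitive r x" and os: "\<And>y. r y x \<Longrightarrow> Ord y"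
  have wf: "\<forall>s. (\<exists>y. r y s) \<and> (\<forall>y. r y s \<longrightarrow> r y x) \<longrightarrow>
          (\<exists>y. r y s \<and> (\<forall>z. r z s \<longrightarrow> \<not> r z y))"
  proof (intro allI impI, elim conjE exE)
    fix s y assume ys: "r y s" and sx: "\<forall>y. r y s \<longrightarrow> r y x"
    have oy: "Ord y" using os sx ys by blast
    show "\<exists>y. r y s \<and> (\<forall>z. r z s \<longrightarrow> \<not> r z y)"
    proof (cases "\<exists>z. r z s \<and> r z y")
      case False then show ?thesis using ys by blast
    next
      case True
      then obtain z0 where z0: "r z0 s" "r z0 y" by blast
      have dd: "D (Suc 1) (\<lambda>xs. r (xs!1) (xs!0))" by (rule Drules acc_rules | simp)+
      obtain t where t: "\<forall>z. r z t \<longleftrightarrow> r z y \<and> r z s"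
        using sepD[OF dd, of "[s]" y] by auto
      obtain m where m: "r m t" "\<forall>z. r z t \<longrightarrow> \<not> r z m"
        using ord_wf[OF oy, of z0 t] t z0 by blast
      have "\<forall>z. r z s \<longrightarrow> \<not> r z m"
        using m t ord_trans[OF oy] by blast
      then show ?thesis using m t by blast
    qed
  qed
  show ?thesis
    unfolding zf_ordinal_def
  proof (intro conjI)
    show "zf_transitive r x" by (rule tx)
    show "\<forall>y. r y x \<longrightarrow> \<not> r y y" using os ord_irrefl by blast
    show "\<forall>y z w. r y x \<and> r z x \<and> r w x \<and> r y z \<and> r z w \<longrightarrow> r y w"
      using os ord_trans by blast
    show "\<forall>y z. r y x \<and> r z x \<longrightarrow> r y z \<or> y = z \<or> r z y"
      using os ord_tri by blast
  qed (rule wf)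
qed

end

context zfm begin
lemma Ord_succ: "Ord a \<Longrightarrow> Ord (succ a)"
proof (rule ord_of_trans)
  assume oa: "Ord a"
  show "zf_transitive r (succ a)" unfolding zf_transitive_def
    using ord_trans[OF oa] by auto
  fix y assume "r y (succ a)"
  then show "Ord y" using oa ord_elem[OF oa] by auto
qed

lemma Ord_emp: "Ord emp"
  by (rule ord_of_trans) (simp_all add: zf_transitive_def)

lemma Ord_Uni: "(\<And>y. r y x \<Longrightarrow> Ord y) \<Longrightarrow> Ord (Uni x)"
proof (rule ord_of_trans)
  assume h: "\<And>y. r y x \<Longrightarrow> Ord y"
  show "zf_transitive r (Uni x)" unfolding zf_transitive_def
    using h ord_trans by (simp, blast)
  fix y assume "r y (Uni x)"
  then show "Ord y" using h ord_elem by (simp, blast)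
qed

end

context zfm begin
lemma emp_in_ord: "Ord a \<Longrightarrow> r y a \<Longrightarrow> r emp a"
proof -
  assume oa: "Ord a" "r y a"
  then obtain m where m: "r m a" "\<forall>z. r z a \<longrightarrow> \<not> r z m" using ord_wf[OF oa(1), of y a] by blast
  have "m = emp"
  proof (rule ext)
    fix z show "r z m = r z emp" using m ord_trans[OF oa(1), of m z] by auto
  qed
  then show ?thesis using m by simp
qed

lemma succ_ext: "(\<forall>z. r z s \<longleftrightarrow> r z y \<or> z = y) \<Longrightarrow> s = succ y"
  by (intro ext) simp

lemma limit_ord: "\<exists>L. Ord L \<and> r emp L \<and> (\<forall>z. r z L \<longrightarrow> r (succ z) L)"
proof -
  obtain I where I1: "\<exists>e. r e I \<and> (\<forall>z. \<not> r z e)"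
    and I2: "\<forall>y. r y I \<longrightarrow> (\<exists>s. r s I \<and> (\<forall>z. r z s \<longleftrightarrow> r z y \<or> z = y))"
    using inf_ax by blast
  obtain e where e: "r e I" "\<forall>z. \<not> r z e" using I1 by blast
  have "e = emp" using e(2) by (intro ext) simp
  then have eI: "r emp I" using e by simp
  have sI: "r (succ y) I" if yI: "r y I" for y
  proof -
    obtain s where "r s I" "\<forall>z. r z s \<longleftrightarrow> r z y \<or> z = y" using I2 yI by blast
    then show ?thesis using succ_ext by blast
  qed
  have dd: "D (Suc 1) (\<lambda>xs. Ord (xs!1) \<and> (\<forall>w. r w (xs!1) \<longrightarrow> r w (xs!0)))"
    by (rule Drules acc_rules | simp)+
  obtain L where L: "\<forall>z. r z L \<longleftrightarrow> r z I \<and> (Ord z \<and> (\<forall>w. r w z \<longrightarrow> r w I))"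
    using sepD[OF dd, of "[I]" I] by auto
  have "Ord L"
  proof (rule ord_of_trans)
    show "zf_transitive r L" unfolding zf_transitive_def
    proof (intro allI impI)
      fix y z assume "r z y \<and> r y L"
      then show "r z L" using L ord_elem[of y z] ord_trans[of y] by blast
    qed
    fix y assume "r y L" then show "Ord y" using L by blast
  qed
  moreover have "r emp L" using L eI Ord_emp by auto
  moreover have "\<forall>z. r z L \<longrightarrow> r (succ z) L" using L sI Ord_succ by auto
  ultimately show ?thesis by blast
qed

end

context zfm begin

definition addp :: "'a \<Rightarrow> 'a \<Rightarrow> 'a" where "addp f p = setof (\<lambda>z. r z f \<or> z = p)"

lemma isset_addp: "isset (\<lambda>z. r z f \<or> z = p)"
  apply (rule isset_sep[of _ "Uni (upair f (upair p p))" 2 "\<lambda>xs. r (xs!2) (xs!0) \<or> xs!2 = xs!1" "[f,p]"])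
  subgoal by (metis upair_mem Uni_mem)
  subgoal by (rule Drules acc_rules | simp)+
  by auto

lemma addp_mem[simp]: "r z (addp f p) \<longleftrightarrow> r z f \<or> z = p"
  unfolding addp_def by (rule setof_mem[OF isset_addp])

lemma D_addp: "acc n f \<Longrightarrow> acc n g \<Longrightarrow> acc n h \<Longrightarrow> D n (\<lambda>xs. h xs = addp (f xs) (g xs))"
proof -
  assume a: "acc n f" "acc n g" "acc n h"
  have "D n (\<lambda>xs. \<forall>z. r z (h xs) \<longleftrightarrow> r z (f xs) \<or> z = g xs)"
    by (rule D_basic acc_rules | simp add: a)+
  then show ?thesis by (rule D_cong) (simp add: addp_def setof_eq[OF isset_addp])
qed

definition restr :: "'a \<Rightarrow> 'a \<Rightarrow> 'a" where
  "restr f c = setof (\<lambda>p. r p f \<and> (\<exists>a b. p = opair a b \<and> r a c))"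

lemma isset_restr: "isset (\<lambda>p. r p f \<and> (\<exists>a b. p = opair a b \<and> r a c))"
  apply (rule isset_sep[of _ f 2 "\<lambda>xs. r (xs!2) (xs!0) \<and> (\<exists>a b. xs!2 = opair a b \<and> r a (xs!1))" "[f,c]"])
  subgoal by auto
  subgoal by (rule Drules acc_rules | simp)+
  by auto

lemma restr_mem[simp]: "r p (restr f c) \<longleftrightarrow> r p f \<and> (\<exists>a b. p = opair a b \<and> r a c)"
  unfolding restr_def by (rule setof_mem[OF isset_restr])

lemma D_restr: "acc n f \<Longrightarrow> acc n g \<Longrightarrow> acc n h \<Longrightarrow> D n (\<lambda>xs. h xs = restr (f xs) (g xs))"
proof -
  assume a: "acc n f" "acc n g" "acc n h"
  have "D n (\<lambda>xs. \<forall>p. r p (h xs) \<longleftrightarrow> r p (f xs) \<and> (\<exists>a b. p = opair a b \<and> r a (g xs)))"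
    by (rule Drules acc_rules | simp add: a)+
  then show ?thesis by (rule D_cong) (simp only: restr_def setof_eq[OF isset_restr])
qed

lemmas Drules2 = D_addp D_restr Drules

end

locale zrec = zfm +
  fixes G :: "'a \<Rightarrow> 'a \<Rightarrow> 'a \<Rightarrow> bool"
  assumes DG: "\<And>n f g h. acc n f \<Longrightarrow> acc n g \<Longrightarrow> acc n h \<Longrightarrow> D n (\<lambda>xs. G (f xs) (g xs) (h xs))"
    and Gfun: "\<And>q u. \<exists>!w. G q u w"
begin

definition approx :: "'a \<Rightarrow> 'a \<Rightarrow> 'a \<Rightarrow> bool" where
  "approx q f d \<longleftrightarrow> (\<forall>p. r p f \<longrightarrow> (\<exists>a b. p = opair a b)) \<and>
     (\<forall>a b. r (opair a b) f \<longrightarrow> r a d \<and> G q (restr f a) b) \<and>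
     (\<forall>a. r a d \<longrightarrow> (\<exists>b. r (opair a b) f))"

lemma D_approx: "acc n f1 \<Longrightarrow> acc n f2 \<Longrightarrow> acc n f3 \<Longrightarrow> D n (\<lambda>xs. approx (f1 xs) (f2 xs) (f3 xs))"
proof -
  assume a: "acc n f1" "acc n f2" "acc n f3"
  have "D n (\<lambda>xs. (\<forall>p. r p (f2 xs) \<longrightarrow> (\<exists>a b. p = opair a b)) \<and>
     (\<forall>a b p. p = opair a b \<longrightarrow> r p (f2 xs) \<longrightarrow> r a (f3 xs) \<and> (\<exists>u. u = restr (f2 xs) a \<and> G (f1 xs) u b)) \<and>
     (\<forall>a. r a (f3 xs) \<longrightarrow> (\<exists>b p. p = opair a b \<and> r p (f2 xs))))"
    by (rule DG Drules2 acc_rules | simp add: a)+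
  then show ?thesis by (rule D_cong) (auto simp: approx_def)
qed

lemma Guniq: "G q u w \<Longrightarrow> G q u w' \<Longrightarrow> w = w'"
  using Gfun by blast

lemma compat:
  assumes od: "Ord d" and od': "Ord d'" and f: "approx q f d" and g: "approx q g d'"
  shows "r (opair a b) f \<Longrightarrow> r (opair a b') g \<Longrightarrow> b = b'"
proof (rule ccontr)
  assume ab: "r (opair a b) f" and ab': "r (opair a b') g" and ne: "b \<noteq> b'"
  let ?R = "\<lambda>xs. \<exists>b b'. (\<exists>p. p = opair (xs!2) b \<and> r p (xs!0)) \<and>
                        (\<exists>p. p = opair (xs!2) b' \<and> r p (xs!1)) \<and> b \<noteq> b'"
  have dR: "D (Suc 2) ?R" by (rule Drules2 acc_rules | simp)+
  have ad: "r a d" using f ab unfolding approx_def by blast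
  have oa: "Ord a" using ord_elem[OF od ad] .
  obtain m where m: "?R ([f,g] @ [m])" "\<forall>x. ?R ([f,g] @ [x]) \<longrightarrow> \<not> r x m"
    using ord_min[OF dR, of "[f,g]" a] ab ab' ne oa by auto
  from m(1) obtain c c' where cc: "r (opair m c) f" "r (opair m c') g" "c \<noteq> c'" by auto
  have md: "r m d" and Gf: "G q (restr f m) c" using f cc unfolding approx_def by blast+
  have md': "r m d'" and Gg: "G q (restr g m) c'" using g cc unfolding approx_def by blast+
  have "restr f m = restr g m"
  proof (rule ext)
    fix p
    show "r p (restr f m) = r p (restr g m)"
    proof
      assume "r p (restr f m)"
      then obtain e x where p: "r p f" "p = opair e x" "r e m" by auto
      have "r e d'" using ord_trans[OF od' md' p(3)] .
      then obtain x' where x': "r (opair e x') g" using g unfolding approx_def by blast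
      have "x = x'" using m(2) p x' by auto
      then show "r p (restr g m)" using p x' by auto
    next
      assume "r p (restr g m)"
      then obtain e x where p: "r p g" "p = opair e x" "r e m" by auto
      have "r e d" using ord_trans[OF od md p(3)] .
      then obtain x' where x': "r (opair e x') f" using f unfolding approx_def by blast
      have "x = x'" using m(2) p x' by auto
      then show "r p (restr f m)" using p x' by auto
    qed
  qed
  then show False using Gf Gg cc(3) Guniq by metis
qed

lemma approx_eq:
  assumes od: "Ord d" and f: "approx q f d" and g: "approx q g d"
  shows "f = g"
proof (rule ext)
  fix p
  show "r p f = r p g"
  proof
    assume pf: "r p f"
    then obtain a b where p: "p = opair a b" using f unfolding approx_def by blast
    then have "r a d" using f pf unfolding approx_def by blast
    then obtain b' where "r (opair a b') g" using g unfolding approx_def by blast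
    then show "r p g" using compat[OF od od f g] pf p by metis
  next
    assume pg: "r p g"
    then obtain a b where p: "p = opair a b" using g unfolding approx_def by blast
    then have "r a d" using g pg unfolding approx_def by blast
    then obtain b' where "r (opair a b') f" using f unfolding approx_def by blast
    then show "r p f" using compat[OF od od f g] pg p by metis
  qed
qed

lemma restr_self: "approx q f a \<Longrightarrow> restr f a = f"
proof (rule ext)
  fix p assume f: "approx q f a"
  show "r p (restr f a) = r p f"
    using f unfolding approx_def by (auto, metis)
qed

lemma approx_restr:
  assumes od: "Ord d" and f: "approx q f d" and cd: "r c d"
  shows "approx q (restr f c) c"
proof -
  have oc: "Ord c" using ord_elem[OF od cd] .
  have rr: "restr (restr f c) a = restr f a" if ac: "r a c" for a
  proof (rule ext)
    fix p show "r p (restr (restr f c) a) = r p (restr f a)"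
      using ord_trans[OF oc ac] ac by (auto simp: opair_inj)
  qed
  show ?thesis unfolding approx_def
  proof (intro conjI allI impI)
    fix p assume "r p (restr f c)" then show "\<exists>a b. p = opair a b" by auto
  next
    fix a b assume h: "r (opair a b) (restr f c)"
    then have ac: "r a c" by (auto simp: opair_inj)
    show "r a c" by (rule ac)
    have "G q (restr f a) b" using h f unfolding approx_def by auto
    then show "G q (restr (restr f c) a) b" using rr[OF ac] by simp
  next
    fix a assume ac: "r a c"
    then have "r a d" using ord_trans[OF od cd] by blast
    then obtain b where "r (opair a b) f" using f unfolding approx_def by blast
    then show "\<exists>b. r (opair a b) (restr f c)" using ac by auto
  qed
qed

lemma approx_succ:
  assumes oa: "Ord a" and f: "approx q f a" and w: "G q f w"
  shows "approx q (addp f (opair a w)) (succ a)"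
proof -
  let ?h = "addp f (opair a w)"
  have rr: "restr ?h c = restr f c" if c: "r c (succ a)" for c
  proof (rule ext)
    fix p
    have "\<not> r a c" using c ord_irrefl[OF oa] ord_trans[OF oa, of c a] by auto
    then show "r p (restr ?h c) = r p (restr f c)" by (auto simp: opair_inj)
  qed
  show ?thesis unfolding approx_def
  proof (intro conjI allI impI)
    fix p assume "r p ?h" then show "\<exists>a b. p = opair a b" using f unfolding approx_def by auto
  next
    fix c b assume h: "r (opair c b) ?h"
    show "r c (succ a)" using h f unfolding approx_def by (auto simp: opair_inj)
    then have "restr ?h c = restr f c" by (rule rr)
    moreover have "G q (restr f c) b"
    proof (cases "r (opair c b) f")
      case True then show ?thesis using f unfolding approx_def by blast
    next
      case False then have "c = a" "b = w" using h by (auto simp: opair_inj)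
      then show ?thesis using w restr_self[OF f] by simp
    qed
    ultimately show "G q (restr ?h c) b" by simp
  next
    fix c assume "r c (succ a)"
    then show "\<exists>b. r (opair c b) ?h" using f unfolding approx_def by auto
  qed
qed

end

context zrec begin

lemma approx_ex: "Ord d \<Longrightarrow> \<exists>f. approx q f d"
proof (rule ccontr)
  assume od0: "Ord d" and nf: "\<not> (\<exists>f. approx q f d)"
  let ?R = "\<lambda>xs. Ord (xs!1) \<and> \<not> (\<exists>f. approx (xs!0) f (xs!1))"
  have dR: "D (Suc 1) ?R" by (rule D_approx Drules2 acc_rules | simp)+
  obtain de where de: "?R ([q] @ [de])" "\<forall>x. ?R ([q] @ [x]) \<longrightarrow> \<not> r x de"
    using ord_min[OF dR, of "[q]" d] od0 nf by auto
  have od: "Ord de" and nde: "\<not> (\<exists>f. approx q f de)" using de(1) by auto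
  have below: "\<exists>f. approx q f a" if "r a de" for a
    using de(2) ord_elem[OF od that] that by auto
  let ?H = "\<lambda>xs. \<exists>f w p. approx (xs!0) f (xs!1) \<and> G (xs!0) f w \<and> p = opair (xs!1) w \<and> xs!2 = addp f p"
  have dH: "D (Suc (Suc 1)) ?H" by (rule D_approx DG Drules2 acc_rules | simp)+
  have H1: "\<exists>!h. ?H ([q] @ [a, h])" if a: "r a de" for a
  proof -
    obtain f where f: "approx q f a" using below[OF a] by blast
    obtain w where w: "G q f w" using Gfun by blast
    have oa: "Ord a" using ord_elem[OF od a] .
    show ?thesis
    proof (rule ex1I[of _ "addp f (opair a w)"])
      show "?H ([q] @ [a, addp f (opair a w)])" using f w by auto
    next
      fix h assume "?H ([q] @ [a, h])"
      then obtain f' w' where "approx q f' a" "G q f' w'" "h = addp f' (opair a w')" by auto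
      then show "h = addp f (opair a w)" using approx_eq[OF oa f] w Guniq by metis
    qed
  qed
  obtain Y where Y: "\<forall>h. r h Y \<longleftrightarrow> (\<exists>a. r a de \<and> ?H ([q] @ [a, h]))"
    using replD[OF dH, of "[q]" de] H1 by auto
  have Yapp: "\<exists>a. r a de \<and> approx q h (succ a)" if hY: "r h Y" for h
  proof -
    obtain a f w where "r a de" "approx q f a" "G q f w" "h = addp f (opair a w)"
      using Y hY by auto
    then show ?thesis using approx_succ ord_elem[OF od] by blast
  qed
  let ?U = "Uni Y"
  have oS: "Ord (succ a)" if "r a de" for a using Ord_succ ord_elem[OF od that] by blast
  have sub: "r c de" if "r c (succ a)" "r a de" for a c
    using that ord_trans[OF od] by auto
  have rU: "restr ?U c = restr h c" if h: "r h Y" "approx q h (succ a)" "r a de" and c: "r c (succ a)" for h a c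
  proof (rule ext)
    fix p show "r p (restr ?U c) = r p (restr h c)"
    proof
      assume "r p (restr ?U c)"
      then obtain h' e x where p: "r p h'" "r h' Y" "p = opair e x" "r e c" by auto
      obtain a' where a': "r a' de" "approx q h' (succ a')" using Yapp[OF p(2)] by blast
      have "r e (succ a)" using ord_trans[OF oS[OF h(3)] c p(4)] .
      then obtain x' where x': "r (opair e x') h" using h(2) unfolding approx_def by blast
      have "x = x'" using compat[OF oS[OF a'(1)] oS[OF h(3)] a'(2) h(2)] p x' by blast
      then show "r p (restr h c)" using p x' by auto
    next
      assume "r p (restr h c)" then show "r p (restr ?U c)" using h(1) by auto
    qed
  qed
  have "approx q ?U de" unfolding approx_def
  proof (intro conjI allI impI)
    fix p assume "r p ?U"
    then obtain h where "r p h" "r h Y" by auto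
    then show "\<exists>a b. p = opair a b" using Yapp unfolding approx_def by blast
  next
    fix c b assume "r (opair c b) ?U"
    then obtain h where h: "r (opair c b) h" "r h Y" by auto
    obtain a where a: "r a de" "approx q h (succ a)" using Yapp[OF h(2)] by blast
    have c: "r c (succ a)" and G: "G q (restr h c) b" using h(1) a(2) unfolding approx_def by blast+
    show "r c de" using sub[OF c a(1)] .
    show "G q (restr ?U c) b" using rU[OF h(2) a(2) a(1) c] G by simp
  next
    fix a assume a: "r a de"
    obtain h where "?H ([q] @ [a, h])" using H1[OF a] by blast
    then obtain f w where h: "h = addp f (opair a w)" by auto
    have "r h Y" using Y a \<open>?H ([q] @ [a, h])\<close> by blast
    then have "r (opair a w) ?U" using h by (auto intro: exI[of _ h])
    then show "\<exists>b. r (opair a b) ?U" by blast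
  qed
  then show False using nde by blast
qed

end

context zrec begin
definition Fv :: "'a \<Rightarrow> 'a \<Rightarrow> 'a" where
  "Fv q b = (THE w. \<exists>f. approx q f (succ b) \<and> r (opair b w) f)"

lemma Fv_iff:
  assumes ob: "Ord b"
  shows "(\<exists>f. approx q f (succ b) \<and> r (opair b w) f) \<longleftrightarrow> w = Fv q b"
proof -
  have os: "Ord (succ b)" using Ord_succ[OF ob] .
  obtain f where f: "approx q f (succ b)" using approx_ex[OF os] by blast
  obtain w0 where w0: "r (opair b w0) f" using f unfolding approx_def by auto
  have u: "(\<exists>f. approx q f (succ b) \<and> r (opair b w) f) \<longleftrightarrow> w = w0" for w
  proof
    assume "\<exists>f. approx q f (succ b) \<and> r (opair b w) f"
    then obtain f' where "approx q f' (succ b)" "r (opair b w) f'" by blast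
    then show "w = w0" using compat[OF os os _ f, of f' b w w0] w0 by blast
  next
    assume "w = w0" then show "\<exists>f. approx q f (succ b) \<and> r (opair b w) f" using f w0 by blast
  qed
  then have "Fv q b = w0" unfolding Fv_def by simp
  then show ?thesis using u by simp
qed

lemma Fv_in:
  assumes od: "Ord d" and f: "approx q f d" and bd: "r b d"
  shows "r (opair b (Fv q b)) f"
proof -
  have ob: "Ord b" using ord_elem[OF od bd] .
  obtain g where g: "approx q g (succ b)" "r (opair b (Fv q b)) g" using Fv_iff[OF ob] by blast
  obtain w where w: "r (opair b w) f" using f bd unfolding approx_def by blast
  have "w = Fv q b" using compat[OF od Ord_succ[OF ob] f g(1) w g(2)] .
  then show ?thesis using w by simp
qed

lemma Fv_eq:
  assumes ob: "Ord b" and f: "approx q f b"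
  shows "G q f (Fv q b)"
proof -
  obtain g where g: "approx q g (succ b)" "r (opair b (Fv q b)) g" using Fv_iff[OF ob] by blast
  have "G q (restr g b) (Fv q b)" using g unfolding approx_def by blast
  moreover have "restr g b = f"
    using approx_eq[OF ob approx_restr[OF Ord_succ[OF ob] g(1)] f] by simp
  ultimately show ?thesis by simp
qed

lemma D_Fv: "acc n f1 \<Longrightarrow> acc n f2 \<Longrightarrow> acc n f3 \<Longrightarrow>
  D n (\<lambda>xs. Ord (f2 xs) \<and> f3 xs = Fv (f1 xs) (f2 xs))"
proof -
  assume a: "acc n f1" "acc n f2" "acc n f3"
  have "D n (\<lambda>xs. Ord (f2 xs) \<and> (\<exists>s f p. s = succ (f2 xs) \<and> approx (f1 xs) f s \<and> p = opair (f2 xs) (f3 xs) \<and> r p f))"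
    by (rule D_approx Drules2 acc_rules | simp add: a)+
  then show ?thesis
  proof (rule D_cong)
    fix xs :: "'a list"
    show "(Ord (f2 xs) \<and> (\<exists>s f p. s = succ (f2 xs) \<and> approx (f1 xs) f s \<and> p = opair (f2 xs) (f3 xs) \<and> r p f))
       = (Ord (f2 xs) \<and> f3 xs = Fv (f1 xs) (f2 xs))"
      using Fv_iff[of "f2 xs" "f1 xs" "f3 xs"] by auto
  qed
qed

end

context zfm begin

definition GV :: "'a \<Rightarrow> 'a \<Rightarrow> 'a \<Rightarrow> bool" where
  "GV q f b \<longleftrightarrow> (\<forall>z. r z b \<longleftrightarrow> (\<exists>a c. r (opair a c) f \<and> (\<forall>w. r w z \<longrightarrow> r w c)))"

definition GT :: "'a \<Rightarrow> 'a \<Rightarrow> 'a \<Rightarrow> bool" where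
  "GT q f b \<longleftrightarrow> (\<forall>z. r z b \<longleftrightarrow> (z = q \<or> (\<exists>a c w. r (opair a c) f \<and> r z w \<and> r w c)))"

lemma opair_snd: "r c (upair a c)" "r (upair a c) (opair a c)"
  by (auto simp: opair_def)

lemma ex1_set: "isset P \<Longrightarrow> \<exists>!y. \<forall>z. r z y \<longleftrightarrow> P z"
proof -
  assume "isset P"
  then obtain y where y: "\<forall>z. r z y \<longleftrightarrow> P z" unfolding isset_def by blast
  show ?thesis
  proof (rule ex1I[of _ y])
    show "\<forall>z. r z y \<longleftrightarrow> P z" by (rule y)
    fix y' assume "\<forall>z. r z y' \<longleftrightarrow> P z"
    then show "y' = y" using y by (intro ext) simp
  qed
qed

lemma GV_fun: "\<exists>!w. GV q u w"
proof -
  have "isset (\<lambda>z. \<exists>a c. r (opair a c) u \<and> (\<forall>w. r w z \<longrightarrow> r w c))"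
    apply (rule isset_sep[of _ "Pw (Uni (Uni (Uni u)))" 1 "\<lambda>xs. \<exists>a c. (\<exists>p. p = opair a c \<and> r p (xs!0)) \<and> (\<forall>w. r w (xs!1) \<longrightarrow> r w c)" "[u]"])
    subgoal using opair_snd by (simp, blast)
    subgoal by (rule Drules2 acc_rules | simp)+
    by auto
  then show ?thesis unfolding GV_def by (rule ex1_set)
qed

lemma GT_fun: "\<exists>!w. GT q u w"
proof -
  have "isset (\<lambda>z. z = q \<or> (\<exists>a c w. r (opair a c) u \<and> r z w \<and> r w c))"
    apply (rule isset_sep[of _ "addp (Uni (Uni (Uni (Uni u)))) q" 2 "\<lambda>xs. xs!2 = xs!1 \<or> (\<exists>a c w. (\<exists>p. p = opair a c \<and> r p (xs!0)) \<and> r (xs!2) w \<and> r w c)" "[u,q]"])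
    subgoal using opair_snd by (simp, blast)
    subgoal by (rule Drules2 acc_rules | simp)+
    by auto
  then show ?thesis unfolding GT_def by (rule ex1_set)
qed

lemma D_GV: "acc n f \<Longrightarrow> acc n g \<Longrightarrow> acc n h \<Longrightarrow> D n (\<lambda>xs. GV (f xs) (g xs) (h xs))"
proof -
  assume a: "acc n f" "acc n g" "acc n h"
  have "D n (\<lambda>xs. \<forall>z. r z (h xs) \<longleftrightarrow> (\<exists>a c. (\<exists>p. p = opair a c \<and> r p (g xs)) \<and> (\<forall>w. r w z \<longrightarrow> r w c)))"
    by (rule Drules2 acc_rules | simp add: a)+
  then show ?thesis by (rule D_cong) (auto simp: GV_def)
qed

lemma D_GT: "acc n f \<Longrightarrow> acc n g \<Longrightarrow> acc n h \<Longrightarrow> D n (\<lambda>xs. GT (f xs) (g xs) (h xs))"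
proof -
  assume a: "acc n f" "acc n g" "acc n h"
  have "D n (\<lambda>xs. \<forall>z. r z (h xs) \<longleftrightarrow> (z = f xs \<or> (\<exists>a c w. (\<exists>p. p = opair a c \<and> r p (g xs)) \<and> r z w \<and> r w c)))"
    by (rule Drules2 acc_rules | simp add: a)+
  then show ?thesis by (rule D_cong) (auto simp: GT_def)
qed

end

sublocale zfm \<subseteq> Vr: zrec r pe GV
proof
  show "\<And>n f g h. acc n f \<Longrightarrow> acc n g \<Longrightarrow> acc n h \<Longrightarrow> D n (\<lambda>xs. GV (f xs) (g xs) (h xs))" by (rule D_GV)
  show "\<And>q u. \<exists>!w. GV q u w" by (rule GV_fun)
qed

sublocale zfm \<subseteq> Tr: zrec r pe GT
proof
  show "\<And>n f g h. acc n f \<Longrightarrow> acc n g \<Longrightarrow> acc n h \<Longrightarrow> D n (\<lambda>xs. GT (f xs) (g xs) (h xs))" by (rule D_GT)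
  show "\<And>q u. \<exists>!w. GT q u w" by (rule GT_fun)
qed

context zfm begin

definition Vs :: "'a \<Rightarrow> 'a" where "Vs b = Vr.Fv emp b"

lemma Vs_mem:
  assumes ob: "Ord b"
  shows "r z (Vs b) \<longleftrightarrow> (\<exists>c. r c b \<and> (\<forall>w. r w z \<longrightarrow> r w (Vs c)))"
proof -
  obtain f where f: "Vr.approx emp f b" using Vr.approx_ex[OF ob] by blast
  have G: "GV emp f (Vs b)" unfolding Vs_def using Vr.Fv_eq[OF ob f] .
  have val: "r (opair a c) f \<longleftrightarrow> r a b \<and> c = Vs a" for a c
  proof
    assume ac: "r (opair a c) f"
    then have ab: "r a b" using f unfolding Vr.approx_def by blast
    have "r (opair a (Vs a)) f" unfolding Vs_def using Vr.Fv_in[OF ob f ab] .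
    then have "c = Vs a" using Vr.compat[OF ob ob f f ac] by simp
    then show "r a b \<and> c = Vs a" using ab by simp
  next
    assume "r a b \<and> c = Vs a"
    then show "r (opair a c) f" unfolding Vs_def using Vr.Fv_in[OF ob f] by blast
  qed
  show ?thesis using G unfolding GV_def val by blast
qed

lemma D_Vs: "acc n f \<Longrightarrow> acc n h \<Longrightarrow> D n (\<lambda>xs. Ord (f xs) \<and> h xs = Vs (f xs))"
proof -
  assume a: "acc n f" "acc n h"
  have "D n (\<lambda>xs. \<exists>e. e = emp \<and> Ord (f xs) \<and> h xs = Vr.Fv e (f xs))"
    by (rule Vr.D_Fv Drules2 acc_rules | simp add: a)+
  then show ?thesis by (rule D_cong) (simp add: Vs_def)
qed

lemma tc_ex: "\<exists>T. zf_transitive r T \<and> r x T"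
proof -
  obtain L where L: "Ord L" "r emp L" "\<And>z. r z L \<Longrightarrow> r (succ z) L" using limit_ord by blast
  obtain f where f: "Tr.approx x f L" using Tr.approx_ex[OF L(1)] by blast
  have dd: "D (Suc 1) (\<lambda>xs. \<exists>a c. (\<exists>p. p = opair a c \<and> r p (xs!0)) \<and> r (xs!1) c)"
    by (rule Drules2 acc_rules | simp)+
  obtain T where T: "\<forall>z. r z T \<longleftrightarrow> r z (Uni (Uni (Uni f))) \<and> (\<exists>a c. (\<exists>p. p = opair a c \<and> r p f) \<and> r z c)"
    using sepD[OF dd, of "[f]" "Uni (Uni (Uni f))"] by auto
  have T2: "r z T \<longleftrightarrow> (\<exists>a c. r (opair a c) f \<and> r z c)" for z
    using T opair_snd by (simp, blast)
  have "r x T"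
  proof -
    obtain c where "r (opair emp c) f" using f L(2) unfolding Tr.approx_def by blast
    moreover then have "GT x (restr f emp) c" using f unfolding Tr.approx_def by blast
    ultimately show ?thesis unfolding T2 GT_def by blast
  qed
  moreover have "zf_transitive r T" unfolding zf_transitive_def
  proof (intro allI impI, elim conjE)
    fix w z assume wz: "r w z" and zT: "r z T"
    then obtain a c where ac: "r (opair a c) f" "r z c" using T2 by blast
    have aL: "r a L" using ac f unfolding Tr.approx_def by blast
    obtain c' where c': "r (opair (succ a) c') f" using f L(3)[OF aL] unfolding Tr.approx_def by blast
    then have "GT x (restr f (succ a)) c'" using f unfolding Tr.approx_def by blast
    moreover have "r (opair a c) (restr f (succ a))" using ac by auto
    ultimately have "r w c'" unfolding GT_def using wz ac by blast
    then show "r w T" using c' T2 by blast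
  qed
  ultimately show ?thesis by blast
qed

end

context zfm begin

definition isV :: "'a \<Rightarrow> 'a \<Rightarrow> bool" where "isV b v \<longleftrightarrow> Ord b \<and> v = Vs b"

lemma D_isV: "acc n f \<Longrightarrow> acc n h \<Longrightarrow> D n (\<lambda>xs. isV (f xs) (h xs))"
  unfolding isV_def by (rule D_Vs)

lemmas Drules3 = D_isV Drules2

definition isrank :: "'a \<Rightarrow> 'a \<Rightarrow> bool" where
  "isrank x p \<longleftrightarrow> Ord p \<and> (\<forall>w. r w x \<longrightarrow> r w (Vs p)) \<and>
     (\<forall>c. r c p \<longrightarrow> \<not> (\<forall>w. r w x \<longrightarrow> r w (Vs c)))"

lemma D_isrank: "acc n f \<Longrightarrow> acc n g \<Longrightarrow> D n (\<lambda>xs. isrank (f xs) (g xs))"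
proof -
  assume a: "acc n f" "acc n g"
  have "D n (\<lambda>xs. Ord (g xs) \<and> (\<exists>v. isV (g xs) v \<and> (\<forall>w. r w (f xs) \<longrightarrow> r w v)) \<and>
     (\<forall>c. r c (g xs) \<longrightarrow> \<not> (\<exists>v. isV c v \<and> (\<forall>w. r w (f xs) \<longrightarrow> r w v))))"
    by (rule Drules3 acc_rules | simp add: a)+
  then show ?thesis
  proof (rule D_cong)
    fix xs :: "'a list"
    show "(Ord (g xs) \<and> (\<exists>v. isV (g xs) v \<and> (\<forall>w. r w (f xs) \<longrightarrow> r w v)) \<and>
     (\<forall>c. r c (g xs) \<longrightarrow> \<not> (\<exists>v. isV c v \<and> (\<forall>w. r w (f xs) \<longrightarrow> r w v)))) =
      isrank (f xs) (g xs)"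
      unfolding isrank_def isV_def using ord_elem[of "g xs"] by blast
  qed
qed

lemma rank_uniq: "isrank x a \<Longrightarrow> isrank x b \<Longrightarrow> a = b"
  unfolding isrank_def using ord_tri by blast

lemma rank_ex_of: "Ord b \<Longrightarrow> (\<forall>w. r w x \<longrightarrow> r w (Vs b)) \<Longrightarrow> \<exists>p. isrank x p"
proof -
  assume ob: "Ord b" and xb: "\<forall>w. r w x \<longrightarrow> r w (Vs b)"
  let ?R = "\<lambda>xs. Ord (xs!1) \<and> (\<exists>v. isV (xs!1) v \<and> (\<forall>w. r w (xs!0) \<longrightarrow> r w v))"
  have dR: "D (Suc 1) ?R" by (rule Drules3 acc_rules | simp)+
  obtain m where m: "?R ([x] @ [m])" "\<forall>c. ?R ([x] @ [c]) \<longrightarrow> \<not> r c m"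
    using ord_min[OF dR, of "[x]" b] ob xb by (auto simp: isV_def)
  have "isrank x m" unfolding isrank_def using m ord_elem[of m] by (simp add: isV_def) blast
  then show ?thesis by blast
qed

lemma Vs_succ: "Ord p \<Longrightarrow> (\<forall>w. r w x \<longrightarrow> r w (Vs p)) \<Longrightarrow> r x (Vs (succ p))"
  using Vs_mem[OF Ord_succ] by auto

lemma covering: "\<exists>b. Ord b \<and> (\<forall>w. r w x \<longrightarrow> r w (Vs b))"
proof (rule ccontr)
  assume nx: "\<not> (\<exists>b. Ord b \<and> (\<forall>w. r w x \<longrightarrow> r w (Vs b)))"
  obtain T where T: "zf_transitive r T" "r x T" using tc_ex by blast
  let ?R = "\<lambda>xs. \<not> (\<exists>b v. isV b v \<and> (\<forall>w. r w (xs!0) \<longrightarrow> r w v))"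
  have dR: "D (Suc 0) ?R" by (rule Drules3 acc_rules | simp)+
  obtain B where B: "\<forall>z. r z B \<longleftrightarrow> r z T \<and> ?R ([] @ [z])"
    using sepD[OF dR, of "[]" T] by auto
  have "r x B" using B T nx by (auto simp: isV_def)
  then obtain z where z: "r z B" "\<forall>w. r w z \<longrightarrow> \<not> r w B" using found by blast
  have wr: "\<exists>p. isrank w p" if wz: "r w z" for w
  proof -
    have "r w T" using T(1) z(1) B wz unfolding zf_transitive_def by blast
    then have "\<exists>b. Ord b \<and> (\<forall>u. r u w \<longrightarrow> r u (Vs b))" using z(2) wz B by (auto simp: isV_def)
    then show ?thesis using rank_ex_of by blast
  qed
  let ?S = "\<lambda>xs. \<exists>p. isrank (xs!0) p \<and> xs!1 = succ p"
  have dS: "D (Suc (Suc 0)) ?S" by (rule D_isrank Drules3 acc_rules | simp)+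
  have S1: "\<exists>!y. ?S ([] @ [w, y])" if "r w z" for w
    using wr[OF that] rank_uniq by auto
  obtain Y where Y: "\<forall>y. r y Y \<longleftrightarrow> (\<exists>w. r w z \<and> ?S ([] @ [w, y]))"
    using replD[OF dS, of "[]" z] S1 by auto
  have oU: "Ord (Uni Y)"
  proof (rule Ord_Uni)
    fix y assume "r y Y"
    then obtain w p where "isrank w p" "y = succ p" using Y by auto
    then show "Ord y" using Ord_succ unfolding isrank_def by auto
  qed
  have "\<forall>w. r w z \<longrightarrow> r w (Vs (Uni Y))"
  proof (intro allI impI)
    fix w assume wz: "r w z"
    obtain p where p: "isrank w p" using wr[OF wz] by blast
    have "r (succ p) Y" using Y wz p by auto
    then have pU: "r p (Uni Y)" by (auto intro: exI[of _ "succ p"])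
    show "r w (Vs (Uni Y))" unfolding Vs_mem[OF oU] using pU p unfolding isrank_def by blast
  qed
  then show False using z(1) B oU by (auto simp: isV_def)
qed

lemma rank_ex: "\<exists>p. isrank x p"
  using covering rank_ex_of by blast

end

locale zcls = zfm +
  fixes n0 :: nat and \<phi>0 :: form
  assumes propc: "proper_class r {z. sat r ((\<lambda>i. pe (Suc (2*i)))(n0 := z)) \<phi>0}"
begin

definition Cc :: "'a \<Rightarrow> bool" where "Cc z \<longleftrightarrow> sat r ((\<lambda>i. pe (Suc (2*i)))(n0 := z)) \<phi>0"

lemma D_Cc: "acc n f \<Longrightarrow> D n (\<lambda>xs. Cc (f xs))"
  unfolding Cc_def by (rule D_cls)

lemma C_out: "\<exists>x. Cc x \<and> \<not> r x W"
proof (rule ccontr)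
  assume "\<not> (\<exists>x. Cc x \<and> \<not> r x W)"
  then have sub: "\<And>x. Cc x \<Longrightarrow> r x W" by blast
  have dd: "D (Suc 0) (\<lambda>xs. Cc (xs!0))" by (rule D_Cc acc_rules | simp)+
  obtain s where s: "\<forall>z. r z s \<longleftrightarrow> r z W \<and> Cc z" using sepD[OF dd, of "[]" W] by auto
  then have "\<forall>a. r a s \<longleftrightarrow> a \<in> {z. sat r ((\<lambda>i. pe (Suc (2*i)))(n0 := z)) \<phi>0}"
    using sub unfolding Cc_def by auto
  then show False using propc unfolding proper_class_def by blast
qed

definition PE :: "'a \<Rightarrow> 'a \<Rightarrow> bool" where
  "PE f p \<longleftrightarrow> \<not> (\<exists>a. r (opair a p) f) \<and> (\<exists>x. Cc x \<and> isrank x p)"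

definition GE :: "'a \<Rightarrow> 'a \<Rightarrow> 'a \<Rightarrow> bool" where
  "GE q f b \<longleftrightarrow> PE f b \<and> (\<forall>p. PE f p \<longrightarrow> \<not> r p b)"

lemma D_PE: "acc n f \<Longrightarrow> acc n g \<Longrightarrow> D n (\<lambda>xs. PE (f xs) (g xs))"
proof -
  assume a: "acc n f" "acc n g"
  have "D n (\<lambda>xs. \<not> (\<exists>a p. p = opair a (g xs) \<and> r p (f xs)) \<and> (\<exists>x. Cc x \<and> isrank x (g xs)))"
    by (rule D_Cc D_isrank Drules3 acc_rules | simp add: a)+
  then show ?thesis by (rule D_cong) (auto simp: PE_def)
qed

lemma D_GE: "acc n f \<Longrightarrow> acc n g \<Longrightarrow> acc n h \<Longrightarrow> D n (\<lambda>xs. GE (f xs) (g xs) (h xs))"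
  unfolding GE_def by (rule D_PE Drules3 acc_rules | simp)+

lemma PE_ord: "PE f p \<Longrightarrow> Ord p"
  unfolding PE_def isrank_def by blast

lemma PE_ex: "\<exists>p. PE f p"
proof -
  let ?Q = "\<lambda>xs. (\<exists>a p s. xs!1 = opair a p \<and> Ord p \<and> s = succ p \<and> isV s (xs!2)) \<or>
                 (\<not> (\<exists>a p. xs!1 = opair a p \<and> Ord p) \<and> xs!2 = emp)"
  have dQ: "D (Suc (Suc 1)) ?Q" by (rule Drules3 acc_rules | simp)+
  have Q1: "\<exists>!y. ?Q ([f] @ [u, y])" for u
  proof (cases "\<exists>a p. u = opair a p \<and> Ord p")
    case True
    then obtain a p where ap: "u = opair a p" "Ord p" by blast
    show ?thesis
    proof (rule ex1I[of _ "Vs (succ p)"])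
      show "?Q ([f] @ [u, Vs (succ p)])" using ap Ord_succ by (auto simp: isV_def)
      fix y assume "?Q ([f] @ [u, y])"
      then show "y = Vs (succ p)" using ap by (auto simp: isV_def opair_inj)
    qed
  next
    case False then show ?thesis by auto
  qed
  obtain Y where Y: "\<forall>y. r y Y \<longleftrightarrow> (\<exists>u. r u f \<and> ?Q ([f] @ [u, y]))"
    using replD[OF dQ, of "[f]" f] Q1 by auto
  obtain x where x: "Cc x" "\<not> r x (Uni Y)" using C_out by blast
  obtain p where p: "isrank x p" using rank_ex by blast
  have op: "Ord p" using p unfolding isrank_def by blast
  have "\<not> (\<exists>a. r (opair a p) f)"
  proof
    assume "\<exists>a. r (opair a p) f"
    then obtain a where a: "r (opair a p) f" by blast
    have "?Q ([f] @ [opair a p, Vs (succ p)])" using op Ord_succ by (auto simp: isV_def)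
    then have "r (Vs (succ p)) Y" using Y a by blast
    moreover have "r x (Vs (succ p))" using Vs_succ[OF op] p unfolding isrank_def by blast
    ultimately show False using x(2) by auto
  qed
  then have "PE f p" unfolding PE_def using x p by blast
  then show ?thesis by blast
qed

lemma GE_fun: "\<exists>!w. GE q u w"
proof -
  obtain p where p: "PE u p" using PE_ex by blast
  have dd: "D (Suc 1) (\<lambda>xs. PE (xs!0) (xs!1))" by (rule D_PE acc_rules | simp)+
  obtain m where m: "PE u m" "\<forall>x. PE u x \<longrightarrow> \<not> r x m"
    using ord_min[OF dd, of "[u]" p] p PE_ord by auto
  show ?thesis
  proof (rule ex1I[of _ m])
    show "GE q u m" unfolding GE_def using m by blast
    fix w assume "GE q u w"
    then have w: "PE u w" "\<forall>x. PE u x \<longrightarrow> \<not> r x w" unfolding GE_def by auto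
    show "w = m" using ord_tri[OF PE_ord[OF w(1)] PE_ord[OF m(1)]] w m by blast
  qed
qed

end

sublocale zcls \<subseteq> Er: zrec r pe GE
proof
  show "\<And>n f g h. acc n f \<Longrightarrow> acc n g \<Longrightarrow> acc n h \<Longrightarrow> D n (\<lambda>xs. GE (f xs) (g xs) (h xs))" by (rule D_GE)
  show "\<And>q u. \<exists>!w. GE q u w" by (rule GE_fun)
qed

context zcls begin

definition Psi :: "'a \<Rightarrow> 'a \<Rightarrow> 'a \<Rightarrow> 'a \<Rightarrow> bool" where
  "Psi x y a E \<longleftrightarrow> (r y a \<and> (\<exists>p. isrank x p \<and> r (opair y p) E)) \<or>
     (\<not> (\<exists>b. r b a \<and> (\<exists>p. isrank x p \<and> r (opair b p) E)) \<and> y = emp)"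

lemma D_Psi: "D 4 (\<lambda>xs. Psi (xs!0) (xs!1) (xs!2) (xs!3))"
proof -
  have "D 4 (\<lambda>xs. (r (xs!1) (xs!2) \<and> (\<exists>p. isrank (xs!0) p \<and> (\<exists>q. q = opair (xs!1) p \<and> r q (xs!3)))) \<or>
     (\<not> (\<exists>b. r b (xs!2) \<and> (\<exists>p. isrank (xs!0) p \<and> (\<exists>q. q = opair b p \<and> r q (xs!3)))) \<and> xs!1 = emp))"
    by (rule D_isrank Drules3 acc_rules | simp)+
  then show ?thesis by (rule D_cong) (simp add: Psi_def)
qed

theorem main:
  assumes oa: "Ord \<alpha>" and ne: "\<exists>y. r y \<alpha>"
  shows "\<exists>\<psi> e' i j. i \<noteq> j \<and> class_surj_onto r {z. Cc z} \<psi> e' i j \<alpha>"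
proof -
  obtain E where E: "Er.approx emp E \<alpha>" using Er.approx_ex[OF oa] by blast
  have Eval: "r b \<alpha> \<and> GE emp (restr E b) p" if "r (opair b p) E" for b p
    using E that unfolding Er.approx_def by blast
  have Edom: "\<exists>p. r (opair b p) E" if "r b \<alpha>" for b
    using E that unfolding Er.approx_def by blast
  have inj: "b = b'" if "r (opair b p) E" "r (opair b' p) E" for b b' p
  proof (rule ccontr)
    assume ne: "b \<noteq> b'"
    have bb: "r b \<alpha>" "r b' \<alpha>" using Eval that by blast+
    have G1: "PE (restr E b) p" "PE (restr E b') p" using Eval[OF that(1)] Eval[OF that(2)]
      unfolding GE_def by blast+
    from ord_tri_el[OF oa bb] ne show False
    proof (elim disjE)
      assume "r b b'" then have "r (opair b p) (restr E b')" using that by auto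
      then show False using G1(2) unfolding PE_def by blast
    next
      assume "r b' b" then have "r (opair b' p) (restr E b)" using that by auto
      then show False using G1(1) unfolding PE_def by blast
    qed simp
  qed
  have emp_a: "r emp \<alpha>" using ne emp_in_ord[OF oa] by blast
  obtain \<phi> where \<phi>: "\<And>xs q. length xs = 4 \<Longrightarrow> (\<forall>i. odd i \<longrightarrow> q i = pe i) \<Longrightarrow>
     sat r (env xs q) \<phi> = Psi (xs!0) (xs!1) (xs!2) (xs!3)"
    using D_Psi unfolding D_def by blast
  let ?e = "env [emp, emp, \<alpha>, E] pe"
  have ee: "?e(0 := x, 2 := y) = env [x, y, \<alpha>, E] pe" for x y
  proof (rule HOL.ext)
    fix i show "(?e(0 := x, 2 := y)) i = env [x, y, \<alpha>, E] pe i"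
      by (cases "i = 0"; cases "i = 2") (auto simp: env_def nth_Cons')
  qed
  have sat: "sat r (?e(0 := x, 2 := y)) \<phi> = Psi x y \<alpha> E" for x y
    unfolding ee using \<phi>[of "[x, y, \<alpha>, E]" pe] by simp
  have "class_surj_onto r {z. Cc z} \<phi> ?e 0 2 \<alpha>"
    unfolding class_surj_onto_def sat
  proof (intro conjI ballI allI impI)
    fix x assume "x \<in> {z. Cc z}"
    obtain p where p: "isrank x p" using rank_ex by blast
    have rk: "isrank x p' \<longleftrightarrow> p' = p" for p' using rank_uniq p by blast
    show "\<exists>!y. Psi x y \<alpha> E"
    proof (cases "\<exists>b. r b \<alpha> \<and> r (opair b p) E")
      case True
      then obtain b where b: "r b \<alpha>" "r (opair b p) E" by blast
      show ?thesis
      proof (rule ex1I[of _ b])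
        show "Psi x b \<alpha> E" unfolding Psi_def rk using b by blast
        fix y assume "Psi x y \<alpha> E"
        then show "y = b" unfolding Psi_def rk using b inj by blast
      qed
    next
      case False
      show ?thesis
      proof (rule ex1I[of _ emp])
        show "Psi x emp \<alpha> E" unfolding Psi_def rk using False by blast
        fix y assume "Psi x y \<alpha> E"
        then show "y = emp" unfolding Psi_def rk using False by blast
      qed
    qed
  next
    fix x y assume "x \<in> {z. Cc z}" "Psi x y \<alpha> E"
    then show "r y \<alpha>" unfolding Psi_def using emp_a by blast
  next
    fix y assume ya: "r y \<alpha>"
    obtain p where p: "r (opair y p) E" using Edom[OF ya] by blast
    then have "PE (restr E y) p" using Eval unfolding GE_def by blast
    then obtain x where x: "Cc x" "isrank x p" unfolding PE_def by blast
    then have "Psi x y \<alpha> E" unfolding Psi_def using ya p by blast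
    then show "\<exists>x\<in>{z. Cc z}. Psi x y \<alpha> E" using x by blast
  qed
  then show ?thesis by (intro exI[of _ \<phi>] exI[of _ ?e] exI[of _ 0] exI[of _ 2]) simp
qed

end

theorem proposition7p1:
  fixes r :: "'a \<Rightarrow> 'a \<Rightarrow> bool" and \<phi> :: form and e :: "nat \<Rightarrow> 'a" and n :: nat and \<alpha> :: 'a
  assumes "zf_model r"
    and "proper_class r (def_class r \<phi> e n)"
    and "zf_ordinal r \<alpha>"
    and "\<exists>y. r y \<alpha>"
  shows "\<exists>\<psi> e' i j. i \<noteq> j \<and> class_surj_onto r (def_class r \<phi> e n) \<psi> e' i j \<alpha>"
proof -
  define pe where "pe = (\<lambda>i. e ((i - 1) div 2))"
  have pe2: "(\<lambda>i. pe (Suc (2*i))) = e" by (auto simp: pe_def)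
  have cls: "{z. sat r ((\<lambda>i. pe (Suc (2*i)))(n := z)) \<phi>} = def_class r \<phi> e n"
    unfolding pe2 def_class_def by simp
  interpret zcls r pe n \<phi>
  proof unfold_locales
    show "zf_model r" by (rule assms(1))
    show "proper_class r {z. sat r ((\<lambda>i. pe (Suc (2*i)))(n := z)) \<phi>}"
      unfolding cls by (rule assms(2))
  qed
  have cc: "{z. Cc z} = def_class r \<phi> e n" using cls unfolding Cc_def by simp
  show ?thesis using main[OF assms(3,4)] unfolding cc .
qed

end
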